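(* Let $\mathbb{K}$ be an algebraically closed field of characteristic zero and let $Y=V\times\mathbb{A}^1$ for an irreducible affine variety $V$. Then $Y$ is of type A, i.e. $\mathrm{HD}^*(Y\times\mathbb{A}^1)=\mathbb{K}[Y\times\mathbb{A}^1]$.
   Context: A derivation is locally nilpotent (LND) if every element is killed by some power of it. A slice of an LND $\partial$ is an element $s$ with $\partial(s)=1$. For an affine variety $X$, $\mathrm{HD}^*(X)$ is the $\mathbb{K}$-subalgebra of $\mathbb{K}[X]$ generated by the kernels of all LNDs of $\mathbb{K}[X]$ that have a slice. *)

theory Defs
  imports "HOL-Computational_Algebra.Polynomial"
begin

definition alg_closed_field :: "('k::field) itself \<Rightarrow> bool" where
  "alg_closed_field _ \<longleftrightarrow> (\<forall>p::'k poly. degree p > 0 \<longrightarrow> (\<exists>x. poly p x = 0))"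

definition alg_map :: "('k::field \<Rightarrow> 'r::comm_ring_1) \<Rightarrow> bool" where
  "alg_map e \<longleftrightarrow> e 1 = 1 \<and> (\<forall>a b. e (a + b) = e a + e b) \<and> (\<forall>a b. e (a * b) = e a * e b)"

inductive_set subalg :: "('k \<Rightarrow> 'r::comm_ring_1) \<Rightarrow> 'r set \<Rightarrow> 'r set"
  for e :: "'k \<Rightarrow> 'r" and S :: "'r set" where
  gen: "x \<in> S \<Longrightarrow> x \<in> subalg e S"
| scal: "e c \<in> subalg e S"
| add: "x \<in> subalg e S \<Longrightarrow> y \<in> subalg e S \<Longrightarrow> x + y \<in> subalg e S"
| mult: "x \<in> subalg e S \<Longrightarrow> y \<in> subalg e S \<Longrightarrow> x * y \<in> subalg e S"

definition fin_gen_alg :: "('k \<Rightarrow> 'r::comm_ring_1) \<Rightarrow> bool" where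
  "fin_gen_alg e \<longleftrightarrow> (\<exists>S. finite S \<and> subalg e S = UNIV)"

definition K_derivation :: "('k \<Rightarrow> 'r::comm_ring_1) \<Rightarrow> ('r \<Rightarrow> 'r) \<Rightarrow> bool" where
  "K_derivation e D \<longleftrightarrow>
     (\<forall>a b. D (a + b) = D a + D b) \<and>
     (\<forall>a b. D (a * b) = a * D b + b * D a) \<and>
     (\<forall>c r. D (e c * r) = e c * D r)"

definition LND :: "('k \<Rightarrow> 'r::comm_ring_1) \<Rightarrow> ('r \<Rightarrow> 'r) \<Rightarrow> bool" where
  "LND e D \<longleftrightarrow> K_derivation e D \<and> (\<forall>r. \<exists>n. (D ^^ n) r = 0)"

definition has_slice :: "('r::comm_ring_1 \<Rightarrow> 'r) \<Rightarrow> bool" where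
  "has_slice D \<longleftrightarrow> (\<exists>s. D s = 1)"

definition ker :: "('r::comm_ring_1 \<Rightarrow> 'r) \<Rightarrow> 'r set" where
  "ker D = {r. D r = 0}"

definition HD_star :: "('k \<Rightarrow> 'r::comm_ring_1) \<Rightarrow> 'r set" where
  "HD_star e = subalg e (\<Union> {ker D | D. LND e D \<and> has_slice D})"

end

theory Submission
  imports Defs
begin

lemma degree_pderiv_le': "degree (pderiv p) \<le> degree p - 1"
proof (rule degree_le, intro allI impI)
  fix i assume "degree p - 1 < i"
  then have "degree p < Suc i" by linarith
  then show "coeff (pderiv p) i = 0" by (simp add: coeff_pderiv coeff_eq_0)
qed

lemma pderiv_funpow_zero:
  "degree (p::'a::idom poly) < n \<Longrightarrow> (pderiv ^^ n) p = 0"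
proof (induction n arbitrary: p)
  case 0 then show ?case by simp
next
  case (Suc n)
  show ?case
  proof (cases n)
    case 0
    then have "degree p = 0" using Suc.prems by simp
    then obtain c where "p = [:c:]" by (metis degree_eq_zeroE)
    then show ?thesis using 0 by (simp add: pderiv_pCons)
  next
    case (Suc m)
    have "degree (pderiv p) < n" using degree_pderiv_le'[of p] Suc.prems Suc by linarith
    then show ?thesis by (simp add: funpow_Suc_right Suc.IH del: funpow.simps)
  qed
qed

definition D2 :: "'a::idom poly poly \<Rightarrow> 'a poly poly" where
  "D2 r = map_poly pderiv r"

lemma D2_coeff: "coeff (D2 r) n = pderiv (coeff r n)"
  unfolding D2_def by (simp add: coeff_map_poly)

lemma D2_add: "D2 (p + q) = D2 p + D2 q"
  by (rule poly_eqI) (simp add: D2_coeff pderiv_add)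

lemma D2_smult: "D2 (smult a q) = smult a (D2 q) + smult (pderiv a) q"
  by (rule poly_eqI) (simp add: D2_coeff pderiv_mult algebra_simps)

lemma D2_pCons0: "D2 (pCons 0 r) = pCons 0 (D2 r)"
  by (rule poly_eqI) (simp add: D2_coeff coeff_pCons split: nat.split)

lemma D2_mult: "D2 (p * q) = p * D2 q + q * D2 p"
proof (induction p)
  case 0 then show ?case by (simp add: D2_def)
next
  case (pCons a p)
  have "pCons a p * q = smult a q + pCons 0 (p * q)" by simp
  then have "D2 (pCons a p * q) = smult a (D2 q) + smult (pderiv a) q + pCons 0 (p * D2 q + q * D2 p)"
    by (simp add: D2_add D2_smult D2_pCons0 pCons.IH)
  also have "\<dots> = pCons a p * D2 q + q * D2 (pCons a p)"
  proof -
    have "D2 (pCons a p) = pCons (pderiv a) (D2 p)"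
      by (rule poly_eqI) (simp add: D2_coeff coeff_pCons split: nat.split)
    then show ?thesis by (simp add: algebra_simps)
  qed
  finally show ?case .
qed

lemma D2_funpow: "(D2 ^^ n) r = map_poly (pderiv ^^ n) r"
proof (induction n arbitrary: r)
  case 0 then show ?case by (simp add: map_poly_idI)
next
  case (Suc n)
  have z: "(pderiv ^^ k) 0 = (0::'a poly)" for k by (induction k) auto
  show ?case
    by (rule poly_eqI) (simp add: Suc D2_coeff coeff_map_poly z del: funpow.simps add: funpow_Suc_right)
qed

lemma LND_pderiv: "LND (\<lambda>c. [:[:e c:]:]) (pderiv :: 'a::idom poly poly \<Rightarrow> _)"
  unfolding LND_def K_derivation_def
proof (intro conjI allI)
  fix a b :: "'a poly poly"
  show "pderiv (a + b) = pderiv a + pderiv b" by (rule pderiv_add)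
  show "pderiv (a * b) = a * pderiv b + b * pderiv a" by (rule pderiv_mult)
next
  fix c and r :: "'a poly poly"
  show "pderiv ([:[:e c:]:] * r) = [:[:e c:]:] * pderiv r"
    by (simp add: pderiv_smult)
next
  fix r :: "'a poly poly"
  show "\<exists>n. (pderiv ^^ n) r = 0" using pderiv_funpow_zero[of r "Suc (degree r)"] by blast
qed

lemma LND_D2: "LND (\<lambda>c. [:[:e c:]:]) (D2 :: 'a::idom poly poly \<Rightarrow> _)"
  unfolding LND_def K_derivation_def
proof (intro conjI allI)
  fix a b :: "'a poly poly"
  show "D2 (a + b) = D2 a + D2 b" by (rule D2_add)
  show "D2 (a * b) = a * D2 b + b * D2 a" by (rule D2_mult)
next
  fix c and r :: "'a poly poly"
  have "D2 [:[:e c:]:] = 0" by (rule poly_eqI) (simp add: D2_coeff coeff_pCons pderiv_pCons split: nat.split)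
  then show "D2 ([:[:e c:]:] * r) = [:[:e c:]:] * D2 r"
    by (simp add: D2_smult pderiv_pCons)
next
  fix r :: "'a poly poly"
  define N where "N = (\<Sum>j\<le>degree r. degree (coeff r j))"
  have "(D2 ^^ Suc N) r = 0"
  proof (rule poly_eqI)
    fix i
    have "degree (coeff r i) \<le> N"
    proof (cases "i \<le> degree r")
      case True then show ?thesis unfolding N_def
        by (intro member_le_sum) auto
    next
      case False then show ?thesis by (simp add: coeff_eq_0)
    qed
    then have "(pderiv ^^ Suc N) (coeff r i) = 0" by (intro pderiv_funpow_zero) simp
    moreover have "(pderiv ^^ k) 0 = (0::'a poly)" for k by (induction k) auto
    ultimately show "coeff ((D2 ^^ Suc N) r) i = coeff 0 i"
      by (simp add: D2_funpow coeff_map_poly del: funpow.simps)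
  qed
  then show "\<exists>n. (D2 ^^ n) r = 0" by blast
qed

theorem corollary4:
  fixes e :: "'k::field_char_0 \<Rightarrow> 'a::idom"
  assumes "alg_closed_field TYPE('k)"
    and "alg_map e"
    and "fin_gen_alg e"
  shows "HD_star (\<lambda>c. [:[:e c:]:]) = (UNIV :: 'a poly poly set)"
proof -
  let ?e = "\<lambda>c. [:[:e c:]:]"
  let ?G = "\<Union> {ker D | D. LND ?e D \<and> has_slice D}"
  have s1: "has_slice (pderiv :: 'a poly poly \<Rightarrow> _)" unfolding has_slice_def
    by (rule exI[of _ "[:0,1:]"]) (simp add: pderiv_pCons)
  have s2: "has_slice (D2 :: 'a poly poly \<Rightarrow> _)" unfolding has_slice_def
  proof (rule exI[of _ "[:[:0,1:]:]"])
    show "D2 [:[:0::'a,1:]:] = 1"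
      by (rule poly_eqI) (simp add: D2_coeff coeff_pCons pderiv_pCons split: nat.split)
  qed
  have g1: "[:p:] \<in> ?G" for p :: "'a poly"
  proof -
    have "[:p:] \<in> ker pderiv" unfolding ker_def by (simp add: pderiv_pCons)
    then show ?thesis using LND_pderiv[of e] s1 by blast
  qed
  have g2: "[:0,1:] \<in> ?G"
  proof -
    have "D2 [:0::'a poly,1:] = 0"
      by (rule poly_eqI) (simp add: D2_coeff coeff_pCons split: nat.split)
    then have "[:0,1:] \<in> ker (D2 :: 'a poly poly \<Rightarrow> _)" unfolding ker_def by simp
    then show ?thesis using LND_D2[of e] s2 by blast
  qed
  have "r \<in> subalg ?e ?G" for r :: "'a poly poly"
  proof (induction r)
    case 0
    have "[:0:] \<in> subalg ?e ?G" by (rule subalg.gen[OF g1])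
    then show ?case by simp
  next
    case (pCons p r)
    have "pCons p r = [:p:] + [:0,1:] * r" by simp
    moreover have "[:p:] + [:0,1:] * r \<in> subalg ?e ?G"
      by (intro subalg.add subalg.mult subalg.gen g1 g2 pCons.IH)
    ultimately show ?case by simp
  qed
  then show ?thesis unfolding HD_star_def by blast
qed

end
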